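(* Assume (B1) and (B3). Then for every $\rho\in\mathbb R$ the integral equation $$u(r)=\rho-\int_0^r t^{-\frac{\alpha}{\beta+1}}\Big(\int_0^t s^{\gamma}e^{f(u(s))}ds\Big)^{\frac{1}{\beta+1}}dt,\qquad r\ge0,$$ has a unique continuous solution on $[0,\infty)$.
   Context: (B1) $f\in C^1(\mathbb R,\mathbb R)$, $f'>0$, $\lim_{u\to+\infty}f(u)=+\infty$. (B3) $\alpha>\beta+1>0$ and $\theta=\gamma+2+\beta-\alpha>0$. This integral equation is equivalent to $L(u)+e^{f(u)}=0$, $u(0)=\rho$, $u'(0)=0$, with $L(u)=r^{-\gamma}(r^\alpha|u'|^\beta u')'$. *)

theory Defs
  imports "HOL-Analysis.Analysis"
begin

definition inner_integrand :: "(real \<Rightarrow> real) \<Rightarrow> real \<Rightarrow> (real \<Rightarrow> real) \<Rightarrow> real \<Rightarrow> real" where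
  "inner_integrand f \<gamma> u s = s powr \<gamma> * exp (f (u s))"

definition outer_integrand :: "(real \<Rightarrow> real) \<Rightarrow> real \<Rightarrow> real \<Rightarrow> real \<Rightarrow> (real \<Rightarrow> real) \<Rightarrow> real \<Rightarrow> real" where
  "outer_integrand f \<alpha> \<beta> \<gamma> u t =
     t powr (- \<alpha> / (\<beta> + 1)) * (integral {0..t} (inner_integrand f \<gamma> u)) powr (1 / (\<beta> + 1))"

definition solves_IE :: "(real \<Rightarrow> real) \<Rightarrow> real \<Rightarrow> real \<Rightarrow> real \<Rightarrow> real \<Rightarrow> (real \<Rightarrow> real) \<Rightarrow> bool" where
  "solves_IE f \<alpha> \<beta> \<gamma> \<rho> u \<longleftrightarrow>
     continuous_on {0..} u \<and>
     (\<forall>t\<ge>0. inner_integrand f \<gamma> u integrable_on {0..t}) \<and>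
     (\<forall>r\<ge>0. outer_integrand f \<alpha> \<beta> \<gamma> u integrable_on {0..r} \<and>
             u r = \<rho> - integral {0..r} (outer_integrand f \<alpha> \<beta> \<gamma> u))"

end

theory Submission
  imports Defs
begin

lemma integrable_from_open:
  fixes h g :: "real \<Rightarrow> real"
  assumes "continuous_on {0<..r} h" "g integrable_on {0..r}"
    "\<And>x. x \<in> {0<..r} \<Longrightarrow> \<bar>h x\<bar> \<le> g x"
  shows "h integrable_on {0..r}"
proof -
  have neg: "negligible (({0..r} - {0<..r}) \<union> ({0<..r} - {0..r}))"
    by (rule negligible_subset[of "{0}"]) auto
  have g: "g integrable_on {0<..r}"
    using assms(2) integrable_spike_set_eq[OF neg] by blast
  have "h integrable_on {0<..r}"
    by (rule measurable_bounded_by_integrable_imp_integrable_real[OF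
          continuous_imp_measurable_on_sets_lebesgue[OF assms(1)] g assms(3)]) auto
  then show ?thesis using integrable_spike_set_eq[OF neg] by blast
qed

lemma powr_has_integral0:
  fixes a r :: real
  assumes "a > -1" "r \<ge> 0"
  shows "((\<lambda>s. s powr a) has_integral (r powr (a+1) / (a+1))) {0..r}"
proof -
  have "((\<lambda>s. s powr a) has_integral (r powr (a+1) / (a+1) - 0 powr (a+1) / (a+1))) {0..r}"
  proof (rule fundamental_theorem_of_calculus_interior)
    show "continuous_on {0..r} (\<lambda>s. s powr (a + 1) / (a + 1))"
      using assms by (intro continuous_intros continuous_on_powr') auto
    fix x assume "x \<in> {0<..<r}"
    then show "((\<lambda>s. s powr (a + 1) / (a + 1)) has_vector_derivative x powr a) (at x)"
    proof -
      have a1: "a + 1 \<noteq> 0" using assms by auto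
      have "((\<lambda>s. s powr (a + 1) / (a + 1)) has_real_derivative ((a+1) * x powr (a+1-1)) / (a+1)) (at x)"
        using \<open>x \<in> _\<close> by (auto intro!: derivative_eq_intros)
      then show ?thesis using a1 unfolding has_real_derivative_iff_has_vector_derivative by simp
    qed
  qed (use assms in auto)
  then show ?thesis by simp
qed

lemma W_has_integral0:
  fixes a r l :: real
  assumes "a > -1" "r \<ge> 0" "l > 0"
  shows "((\<lambda>s. s powr a * exp (l * (s powr (a+1) / (a+1)))) has_integral
           ((exp (l * (r powr (a+1) / (a+1))) - 1) / l)) {0..r}"
proof -
  have "((\<lambda>s. s powr a * exp (l * (s powr (a+1) / (a+1)))) has_integral
           (exp (l * (r powr (a+1) / (a+1))) / l - exp (l * (0 powr (a+1) / (a+1))) / l)) {0..r}"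
  proof (rule fundamental_theorem_of_calculus_interior)
    show "continuous_on {0..r} (\<lambda>s. exp (l * (s powr (a+1) / (a+1))) / l)"
      using assms by (intro continuous_intros continuous_on_powr') auto
    fix x assume "x \<in> {0<..<r}"
    then show "((\<lambda>s. exp (l * (s powr (a+1) / (a+1))) / l) has_vector_derivative
        x powr a * exp (l * (x powr (a+1) / (a+1)))) (at x)"
    proof -
      have a1: "a + 1 \<noteq> 0" using assms by auto
      have "((\<lambda>s. exp (l * (s powr (a+1) / (a+1))) / l) has_real_derivative
          exp (l * (x powr (a+1) / (a+1))) * (l * ((a+1) * x powr (a+1-1) / (a+1))) / l) (at x)"
        using \<open>x \<in> _\<close> by (auto intro!: derivative_eq_intros)
      then show ?thesis using a1 assms unfolding has_real_derivative_iff_has_vector_derivative by (simp add: mult.commute)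
    qed
  qed (use assms in auto)
  then show ?thesis using assms by (simp add: diff_divide_distrib)
qed

lemma powr_between_le:
  fixes a b z q :: real
  assumes "0 < a" "a \<le> z" "z \<le> b"
  shows "z powr q \<le> a powr q + b powr q"
proof (cases "q \<ge> 0")
  case True
  then have "z powr q \<le> b powr q" using assms by (intro powr_mono2) auto
  moreover have "a powr q \<ge> 0" by simp
  ultimately show ?thesis by linarith
next
  case False
  then have "z powr q \<le> a powr q" using assms by (intro powr_mono2') auto
  moreover have "b powr q \<ge> 0" by simp
  ultimately show ?thesis by linarith
qed

lemma powr_lipschitz:
  fixes x y c C T P :: real
  assumes "0 < c" "c \<le> C" "0 < T" "c*T \<le> x" "x \<le> C*T" "c*T \<le> y" "y \<le> C*T" "P > 0"
  shows "\<bar>x powr P - y powr P\<bar> \<le> P * (c powr (P-1) + C powr (P-1)) * T powr (P-1) * \<bar>x - y\<bar>"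
proof -
  have key: "\<bar>x powr P - y powr P\<bar> \<le> P * (c powr (P-1) + C powr (P-1)) * T powr (P-1) * \<bar>x - y\<bar>"
    if "c*T \<le> x" "x < y" "y \<le> C*T" for x y
  proof -
    have xp: "x > 0" using that assms by (smt (verit) mult_pos_pos)
    have "\<exists>z>x. z < y \<and> y powr P - x powr P = (y - x) * (P * z powr (P - 1))"
      using \<open>x < y\<close> xp
      by (intro MVT2[of x y "\<lambda>x. x powr P" "\<lambda>z. P * z powr (P - 1)"]) (auto intro!: has_real_derivative_powr)
    then obtain z where z: "x < z" "z < y" "y powr P - x powr P = (y - x) * (P * z powr (P - 1))"
      by blast
    have zb: "z powr (P-1) \<le> (c*T) powr (P-1) + (C*T) powr (P-1)"
      using z that xp assms by (intro powr_between_le) (auto simp: mult_pos_pos)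
    also have "\<dots> = (c powr (P-1) + C powr (P-1)) * T powr (P-1)"
      using assms by (simp add: powr_mult distrib_right)
    finally have "P * z powr (P-1) \<le> P * ((c powr (P-1) + C powr (P-1)) * T powr (P-1))"
      using assms by (intro mult_left_mono) auto
    moreover have "x powr P \<le> y powr P" using xp that assms by (intro powr_mono2) auto
    ultimately show ?thesis using z that
      by (smt (verit, ccfv_SIG) mult.commute mult.left_commute mult_left_mono)
  qed
  show ?thesis
  proof (cases x y rule: linorder_cases)
    case less then show ?thesis using key assms by blast
  next
    case equal then show ?thesis using assms by simp
  next
    case greater then show ?thesis using key[of y x] assms by (simp add: abs_minus_commute)
  qed
qed


locale IE =
  fixes f :: "real \<Rightarrow> real" and \<alpha> \<beta> \<gamma> :: real
  assumes fmono: "\<And>x y. x \<le> y \<Longrightarrow> f x \<le> f y"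
    and fcont: "continuous_on UNIV f"
    and Elip: "\<And>m \<rho>. m \<le> \<rho> \<Longrightarrow> \<exists>L\<ge>0. \<forall>x\<in>{m..\<rho>}. \<forall>y\<in>{m..\<rho>}. \<bar>exp (f x) - exp (f y)\<bar> \<le> L * \<bar>x - y\<bar>"
    and a1: "\<alpha> > \<beta> + 1" and b1: "\<beta> + 1 > 0" and th: "\<gamma> + 2 + \<beta> - \<alpha> > 0"
begin

definition "P = 1 / (\<beta> + 1)"
definition "\<kappa> = (\<gamma> + 1 - \<alpha>) / (\<beta> + 1)"

lemma P_pos: "P > 0" using b1 by (simp add: P_def)
lemma gam: "\<gamma> > -1" using a1 b1 th by linarith
lemma kap: "\<kappa> > -1"
proof -
  have "\<kappa> + 1 = (\<gamma> + 2 + \<beta> - \<alpha>) / (\<beta> + 1)" using b1 by (simp add: \<kappa>_def field_simps)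
  also have "\<dots> > 0" using b1 th by simp
  finally show ?thesis by simp
qed

lemma expo:
  assumes "t > 0" "c \<ge> 0"
  shows "t powr (- \<alpha> / (\<beta> + 1)) * (c * t powr (\<gamma> + 1)) powr P = c powr P * t powr \<kappa>"
proof -
  have "(c * t powr (\<gamma> + 1)) powr P = c powr P * t powr ((\<gamma>+1) * P)"
    using assms by (simp add: powr_mult powr_powr)
  moreover have "t powr (- \<alpha> / (\<beta> + 1)) * t powr ((\<gamma>+1) * P) = t powr \<kappa>"
  proof -
    have e: "- \<alpha> / (\<beta> + 1) + (\<gamma>+1) * P = \<kappa>"
      using b1 by (simp add: \<kappa>_def P_def diff_divide_distrib)
    show ?thesis by (simp only: powr_add[symmetric] e)
  qed
  ultimately show ?thesis by (simp add: mult.commute mult.left_commute)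
qed

lemma inner_props:
  assumes u: "continuous_on {0..R} u" and ub: "\<forall>s\<in>{0..R}. m \<le> u s \<and> u s \<le> \<rho>"
    and t: "0 \<le> t" "t \<le> R"
  shows "inner_integrand f \<gamma> u integrable_on {0..t}"
    and "exp (f m) * (t powr (\<gamma>+1) / (\<gamma>+1)) \<le> integral {0..t} (inner_integrand f \<gamma> u)"
    and "integral {0..t} (inner_integrand f \<gamma> u) \<le> exp (f \<rho>) * (t powr (\<gamma>+1) / (\<gamma>+1))"
proof -
  have pi: "((\<lambda>s. s powr \<gamma>) has_integral (t powr (\<gamma>+1) / (\<gamma>+1))) {0..t}"
    using powr_has_integral0[OF gam t(1)] .
  have pim: "((\<lambda>s. c * s powr \<gamma>) has_integral (c * (t powr (\<gamma>+1) / (\<gamma>+1)))) {0..t}" for c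
    using has_integral_mult_right[OF pi] .
  have cu: "continuous_on {0<..t} u" by (rule continuous_on_subset[OF u]) (use t in auto)
  have cont: "continuous_on {0<..t} (inner_integrand f \<gamma> u)"
    unfolding inner_integrand_def
    by (intro continuous_intros continuous_on_compose2[OF fcont cu]) auto
  have le: "exp (f (u s)) \<le> exp (f \<rho>)" "exp (f m) \<le> exp (f (u s))" if "s \<in> {0..t}" for s
    using ub that t fmono by auto
  show int: "inner_integrand f \<gamma> u integrable_on {0..t}"
  proof (rule integrable_from_open[OF cont])
    show "(\<lambda>s. exp (f \<rho>) * s powr \<gamma>) integrable_on {0..t}" using pim by blast
    fix x assume "x \<in> {0<..t}"
    then show "\<bar>inner_integrand f \<gamma> u x\<bar> \<le> exp (f \<rho>) * x powr \<gamma>"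
      using le[of x] by (auto simp: inner_integrand_def abs_mult mult.commute intro: mult_left_mono)
  qed
  have pw1: "exp (f m) * s powr \<gamma> \<le> inner_integrand f \<gamma> u s" if "s \<in> {0..t}" for s
    unfolding inner_integrand_def using le(2)[OF that]
    by (metis mult.commute mult_left_mono powr_ge_zero)
  have pw2: "inner_integrand f \<gamma> u s \<le> exp (f \<rho>) * s powr \<gamma>" if "s \<in> {0..t}" for s
    unfolding inner_integrand_def using le(1)[OF that]
    by (metis mult.commute mult_left_mono powr_ge_zero)
  show "exp (f m) * (t powr (\<gamma>+1) / (\<gamma>+1)) \<le> integral {0..t} (inner_integrand f \<gamma> u)"
    using integral_le[OF has_integral_integrable[OF pim] int pw1] integral_unique[OF pim] by simp
  show "integral {0..t} (inner_integrand f \<gamma> u) \<le> exp (f \<rho>) * (t powr (\<gamma>+1) / (\<gamma>+1))"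
    using integral_le[OF int has_integral_integrable[OF pim] pw2] integral_unique[OF pim] by simp
qed


lemma outer_props:
  assumes u: "continuous_on {0..R} u" and ub: "\<forall>s\<in>{0..R}. m \<le> u s \<and> u s \<le> \<rho>"
    and R: "0 \<le> R"
  shows "\<And>t. t \<in> {0..R} \<Longrightarrow> 0 \<le> outer_integrand f \<alpha> \<beta> \<gamma> u t \<and>
            outer_integrand f \<alpha> \<beta> \<gamma> u t \<le> (exp (f \<rho>) / (\<gamma>+1)) powr P * t powr \<kappa>"
    and "continuous_on {0<..R} (outer_integrand f \<alpha> \<beta> \<gamma> u)"
    and "\<And>r. r \<in> {0..R} \<Longrightarrow> outer_integrand f \<alpha> \<beta> \<gamma> u integrable_on {0..r}"
    and "\<And>r. r \<in> {0..R} \<Longrightarrow> 0 \<le> integral {0..r} (outer_integrand f \<alpha> \<beta> \<gamma> u)"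
    and "\<And>r. r \<in> {0..R} \<Longrightarrow> integral {0..r} (outer_integrand f \<alpha> \<beta> \<gamma> u)
            \<le> (exp (f \<rho>) / (\<gamma>+1)) powr P * (r powr (\<kappa>+1) / (\<kappa>+1))"
    and "continuous_on {0..R} (\<lambda>r. integral {0..r} (outer_integrand f \<alpha> \<beta> \<gamma> u))"
proof -
  let ?O = "outer_integrand f \<alpha> \<beta> \<gamma> u"
  let ?I = "\<lambda>t. integral {0..t} (inner_integrand f \<gamma> u)"
  define C0 where "C0 = exp (f \<rho>) / (\<gamma>+1)"
  have g1: "\<gamma> + 1 > 0" using gam by simp
  have Ipos: "?I t > 0" if "t \<in> {0<..R}" for t
  proof -
    have "0 < exp (f m) * (t powr (\<gamma>+1) / (\<gamma>+1))" using that g1 by simp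
    also have "\<dots> \<le> ?I t" using inner_props(2)[OF u ub] that by auto
    finally show ?thesis .
  qed
  have Ile: "?I t \<le> C0 * t powr (\<gamma>+1)" if "t \<in> {0..R}" for t
    using inner_props(3)[OF u ub] that by (auto simp: C0_def)
  have bnd: "0 \<le> ?O t \<and> ?O t \<le> C0 powr P * t powr \<kappa>" if t: "t \<in> {0..R}" for t
  proof (cases "t = 0")
    case True then show ?thesis by (simp add: outer_integrand_def)
  next
    case False
    then have tp: "t \<in> {0<..R}" using t by auto
    have "?I t powr P \<le> (C0 * t powr (\<gamma>+1)) powr P"
      using Ipos[OF tp] Ile t P_pos by (intro powr_mono2) auto
    then have "?O t \<le> t powr (- \<alpha> / (\<beta> + 1)) * (C0 * t powr (\<gamma>+1)) powr P"
      unfolding outer_integrand_def P_def by (intro mult_left_mono) auto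
    also have "\<dots> = C0 powr P * t powr \<kappa>" using tp by (intro expo) (auto simp: C0_def g1 less_imp_le)
    finally show ?thesis by (simp add: outer_integrand_def)
  qed
  then show "\<And>t. t \<in> {0..R} \<Longrightarrow> 0 \<le> ?O t \<and> ?O t \<le> (exp (f \<rho>) / (\<gamma>+1)) powr P * t powr \<kappa>"
    by (simp add: C0_def)
  have Ic: "continuous_on {0..R} ?I"
    by (rule indefinite_integral_continuous_1[OF inner_props(1)[OF u ub R order_refl]])
  have Ic': "continuous_on {0<..R} ?I" by (rule continuous_on_subset[OF Ic]) auto
  show cO: "continuous_on {0<..R} ?O"
    unfolding outer_integrand_def
    using Ipos by (intro continuous_intros Ic') force+
  have kint: "((\<lambda>t. C0 powr P * t powr \<kappa>) has_integral C0 powr P * (r powr (\<kappa>+1) / (\<kappa>+1))) {0..r}"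
    if "r \<ge> 0" for r
    using has_integral_mult_right[OF powr_has_integral0[OF kap that]] .
  show int: "?O integrable_on {0..r}" if r: "r \<in> {0..R}" for r
  proof (rule integrable_from_open)
    show "continuous_on {0<..r} ?O" by (rule continuous_on_subset[OF cO]) (use r in auto)
    show "(\<lambda>t. C0 powr P * t powr \<kappa>) integrable_on {0..r}" using kint r by auto
    fix x assume "x \<in> {0<..r}"
    then show "\<bar>?O x\<bar> \<le> C0 powr P * x powr \<kappa>" using bnd[of x] r by auto
  qed
  show "0 \<le> integral {0..r} ?O" if r: "r \<in> {0..R}" for r
    by (rule integral_nonneg[OF int[OF r]]) (use bnd r in auto)
  show "integral {0..r} ?O \<le> (exp (f \<rho>) / (\<gamma>+1)) powr P * (r powr (\<kappa>+1) / (\<kappa>+1))"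
    if r: "r \<in> {0..R}" for r
    using integral_le[OF int[OF r] has_integral_integrable[OF kint] ] integral_unique[OF kint] bnd r
    by (auto simp: C0_def)
  show "continuous_on {0..R} (\<lambda>r. integral {0..r} ?O)"
    by (rule indefinite_integral_continuous_1[OF int]) (use R in auto)
qed


definition "W l s = exp (l * (s powr (\<kappa>+1) / (\<kappa>+1)))"

lemma W_ge1: "l \<ge> 0 \<Longrightarrow> s \<ge> 0 \<Longrightarrow> W l s \<ge> 1"
  using kap unfolding W_def by simp

lemma W_mono: "l \<ge> 0 \<Longrightarrow> 0 \<le> s \<Longrightarrow> s \<le> t \<Longrightarrow> W l s \<le> W l t"
  using kap unfolding W_def
  by (auto intro!: mult_left_mono divide_right_mono powr_mono2)

lemma W_int: "l > 0 \<Longrightarrow> r \<ge> 0 \<Longrightarrow>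
   ((\<lambda>t. c * (t powr \<kappa> * W l t)) has_integral c * ((W l r - 1) / l)) {0..r}"
  unfolding W_def by (intro has_integral_mult_right W_has_integral0 kap) auto

lemma contraction:
  assumes "m \<le> \<rho>"
  obtains M where "M \<ge> 0" and
   "\<And>l R u v D r. l > 0 \<Longrightarrow> continuous_on {0..R} u \<Longrightarrow> continuous_on {0..R} v \<Longrightarrow>
        \<forall>s\<in>{0..R}. m \<le> u s \<and> u s \<le> \<rho> \<Longrightarrow> \<forall>s\<in>{0..R}. m \<le> v s \<and> v s \<le> \<rho> \<Longrightarrow> D \<ge> 0 \<Longrightarrow>
        \<forall>s\<in>{0..R}. \<bar>u s - v s\<bar> \<le> D * W l s \<Longrightarrow> r \<in> {0..R} \<Longrightarrow>
     \<bar>integral {0..r} (outer_integrand f \<alpha> \<beta> \<gamma> u) - integral {0..r} (outer_integrand f \<alpha> \<beta> \<gamma> v)\<bar>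
        \<le> M / l * D * W l r"
proof -
  obtain L where L: "L \<ge> 0" "\<forall>x\<in>{m..\<rho>}. \<forall>y\<in>{m..\<rho>}. \<bar>exp (f x) - exp (f y)\<bar> \<le> L * \<bar>x - y\<bar>"
    using Elip[OF assms] by blast
  have g1: "\<gamma> + 1 > 0" using gam by simp
  define c0 where "c0 = exp (f m) / (\<gamma>+1)"
  define C0 where "C0 = exp (f \<rho>) / (\<gamma>+1)"
  define K where "K = P * (c0 powr (P-1) + C0 powr (P-1))"
  define M where "M = K * L / (\<gamma>+1)"
  have c0p: "c0 > 0" using g1 by (simp add: c0_def)
  have c0C0: "c0 \<le> C0" unfolding c0_def C0_def using fmono[OF assms] g1 by (simp add: divide_right_mono)
  have K0: "K \<ge> 0" unfolding K_def using P_pos by simp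
  have M0: "M \<ge> 0" unfolding M_def using K0 L g1 by simp
  show thesis
  proof (rule that[OF M0])
    fix l R u v D r
    assume l: "l > 0" and u: "continuous_on {0..R} u" and v: "continuous_on {0..R} v"
      and ub: "\<forall>s\<in>{0..R}. m \<le> u s \<and> u s \<le> \<rho>" and vb: "\<forall>s\<in>{0..R}. m \<le> v s \<and> v s \<le> \<rho>"
      and D: "D \<ge> 0" and uv: "\<forall>s\<in>{0..R}. \<bar>u s - v s\<bar> \<le> D * W l s" and r: "r \<in> {0..R}"
    have R: "R \<ge> 0" using r by auto
    let ?Iu = "\<lambda>t. integral {0..t} (inner_integrand f \<gamma> u)"
    let ?Iv = "\<lambda>t. integral {0..t} (inner_integrand f \<gamma> v)"
    let ?Ou = "outer_integrand f \<alpha> \<beta> \<gamma> u"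
    let ?Ov = "outer_integrand f \<alpha> \<beta> \<gamma> v"
    have Idiff: "\<bar>?Iu t - ?Iv t\<bar> \<le> L * D * W l t * (t powr (\<gamma>+1) / (\<gamma>+1))"
      if t: "t \<in> {0..R}" for t
    proof -
      have iu: "inner_integrand f \<gamma> u integrable_on {0..t}" using inner_props(1)[OF u ub] t by auto
      have iv: "inner_integrand f \<gamma> v integrable_on {0..t}" using inner_props(1)[OF v vb] t by auto
      have pi: "((\<lambda>s. (L * D * W l t) * s powr \<gamma>) has_integral (L * D * W l t) * (t powr (\<gamma>+1) / (\<gamma>+1))) {0..t}"
        using has_integral_mult_right[OF powr_has_integral0[OF gam]] t by auto
      have pw: "norm (inner_integrand f \<gamma> u s - inner_integrand f \<gamma> v s) \<le> (L * D * W l t) * s powr \<gamma>"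
        if s: "s \<in> {0..t}" for s
      proof -
        have sR: "s \<in> {0..R}" using s t by auto
        have "\<bar>exp (f (u s)) - exp (f (v s))\<bar> \<le> L * \<bar>u s - v s\<bar>"
          using L(2) ub vb sR by auto
        also have "\<dots> \<le> L * (D * W l s)" using uv sR L(1) by (intro mult_left_mono) auto
        also have "\<dots> \<le> L * (D * W l t)" using s l L(1) D W_mono[of l s t]
          by (intro mult_left_mono) auto
        finally have e: "\<bar>exp (f (u s)) - exp (f (v s))\<bar> \<le> L * D * W l t" by (simp add: mult.assoc)
        have "norm (inner_integrand f \<gamma> u s - inner_integrand f \<gamma> v s)
             = s powr \<gamma> * \<bar>exp (f (u s)) - exp (f (v s))\<bar>"
          by (simp add: inner_integrand_def right_diff_distrib[symmetric] abs_mult)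
        also have "\<dots> \<le> s powr \<gamma> * (L * D * W l t)" using e by (intro mult_left_mono) auto
        finally show ?thesis by (simp add: mult.commute)
      qed
      have "\<bar>?Iu t - ?Iv t\<bar> = norm (integral {0..t} (\<lambda>s. inner_integrand f \<gamma> u s - inner_integrand f \<gamma> v s))"
        using integral_diff[OF iu iv] by simp
      also have "\<dots> \<le> integral {0..t} (\<lambda>s. (L * D * W l t) * s powr \<gamma>)"
        by (rule integral_norm_bound_integral[OF integrable_diff[OF iu iv] has_integral_integrable[OF pi] pw])
      also have "\<dots> = L * D * W l t * (t powr (\<gamma>+1) / (\<gamma>+1))" using integral_unique[OF pi] .
      finally show ?thesis .
    qed
    have Odiff: "\<bar>?Ou t - ?Ov t\<bar> \<le> M * D * (t powr \<kappa> * W l t)" if t: "t \<in> {0..R}" for t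
    proof (cases "t = 0")
      case True then show ?thesis by (simp add: outer_integrand_def)
    next
      case False
      then have tp: "t > 0" using t by auto
      define T where "T = t powr (\<gamma>+1)"
      have Tp: "T > 0" using tp by (simp add: T_def)
      have bu: "c0 * T \<le> ?Iu t" "?Iu t \<le> C0 * T"
        using inner_props(2,3)[OF u ub] t by (auto simp: c0_def C0_def T_def)
      have bv: "c0 * T \<le> ?Iv t" "?Iv t \<le> C0 * T"
        using inner_props(2,3)[OF v vb] t by (auto simp: c0_def C0_def T_def)
      have pl: "\<bar>?Iu t powr P - ?Iv t powr P\<bar> \<le> K * T powr (P-1) * \<bar>?Iu t - ?Iv t\<bar>"
        using powr_lipschitz[OF c0p c0C0 Tp bu bv P_pos] by (simp add: K_def)
      also have "\<dots> \<le> K * T powr (P-1) * (L * D * W l t * (T / (\<gamma>+1)))"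
        using Idiff[OF t] K0 by (intro mult_left_mono) (auto simp: T_def)
      also have "\<dots> = M * D * W l t * (T powr (P-1) * T)"
        by (simp add: M_def field_simps)
      also have "T powr (P-1) * T = (1 * T) powr P"
        using Tp by (simp add: powr_diff)
      finally have pl2: "\<bar>?Iu t powr P - ?Iv t powr P\<bar> \<le> M * D * W l t * (1 * T) powr P" .
      have "\<bar>?Ou t - ?Ov t\<bar> = t powr (- \<alpha> / (\<beta> + 1)) * \<bar>?Iu t powr P - ?Iv t powr P\<bar>"
        by (simp add: outer_integrand_def P_def right_diff_distrib[symmetric] abs_mult)
      also have "\<dots> \<le> t powr (- \<alpha> / (\<beta> + 1)) * (M * D * W l t * (1 * T) powr P)"
        using pl2 by (intro mult_left_mono) auto
      also have "\<dots> = M * D * W l t * (t powr (- \<alpha> / (\<beta> + 1)) * (1 * T) powr P)" by simp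
      also have "t powr (- \<alpha> / (\<beta> + 1)) * (1 * T) powr P = t powr \<kappa>"
        using expo[OF tp, of 1] by (simp add: T_def)
      finally show ?thesis by (simp add: mult.commute mult.left_commute)
    qed
    have ou: "?Ou integrable_on {0..r}" using outer_props(3)[OF u ub R] r by auto
    have ov: "?Ov integrable_on {0..r}" using outer_props(3)[OF v vb R] r by auto
    have wi: "((\<lambda>t. (M * D) * (t powr \<kappa> * W l t)) has_integral (M * D) * ((W l r - 1) / l)) {0..r}"
      using W_int[OF l] r by auto
    have "\<bar>integral {0..r} ?Ou - integral {0..r} ?Ov\<bar> = norm (integral {0..r} (\<lambda>t. ?Ou t - ?Ov t))"
      using integral_diff[OF ou ov] by simp
    also have "\<dots> \<le> integral {0..r} (\<lambda>t. (M * D) * (t powr \<kappa> * W l t))"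
      by (rule integral_norm_bound_integral[OF integrable_diff[OF ou ov] has_integral_integrable[OF wi]])
         (use Odiff r in auto)
    also have "\<dots> = (M * D) * ((W l r - 1) / l)" using integral_unique[OF wi] .
    also have "\<dots> \<le> (M * D) * (W l r / l)"
      using M0 D l by (intro mult_left_mono divide_right_mono) auto
    finally show "\<bar>integral {0..r} ?Ou - integral {0..r} ?Ov\<bar> \<le> M / l * D * W l r"
      by (simp add: field_simps)
  qed
qed


lemma half_pow_le0:
  fixes x c :: real
  assumes "\<And>n. x \<le> (1/2)^n * c"
  shows "x \<le> 0"
proof -
  have "(\<lambda>n. (1/2::real)^n * c) \<longlonglongrightarrow> 0 * c"
    by (intro tendsto_mult LIMSEQ_power_zero tendsto_const) auto
  then show ?thesis using assms by (intro LIMSEQ_le_const[of _ 0]) auto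
qed

definition "lsol \<rho> R u \<longleftrightarrow> continuous_on {0..R} u \<and>
   (\<forall>t\<in>{0..R}. inner_integrand f \<gamma> u integrable_on {0..t}) \<and>
   (\<forall>r\<in>{0..R}. outer_integrand f \<alpha> \<beta> \<gamma> u integrable_on {0..r} \<and>
       u r = \<rho> - integral {0..r} (outer_integrand f \<alpha> \<beta> \<gamma> u))"

lemma lsol_bounds:
  assumes "lsol \<rho> R u" "R \<ge> 0"
  obtains m where "m \<le> \<rho>" "\<forall>s\<in>{0..R}. m \<le> u s \<and> u s \<le> \<rho>"
proof -
  have up: "u s \<le> \<rho>" if "s \<in> {0..R}" for s
  proof -
    have "0 \<le> integral {0..s} (outer_integrand f \<alpha> \<beta> \<gamma> u)"
      using assms(1) that unfolding lsol_def
      by (intro integral_nonneg) (auto simp: outer_integrand_def)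
    then show ?thesis using assms(1) that unfolding lsol_def by auto
  qed
  obtain x where x: "x \<in> {0..R}" "\<forall>y\<in>{0..R}. u x \<le> u y"
    using continuous_attains_inf[of "{0..R}" u] assms unfolding lsol_def by auto
  show thesis
    by (rule that[of "min (u x) \<rho>"]) (use x up in auto)
qed

lemma lsol_unique:
  assumes u: "lsol \<rho> R u" and v: "lsol \<rho> R v" and R: "R \<ge> 0"
  shows "\<forall>s\<in>{0..R}. u s = v s"
proof -
  obtain m1 where m1: "m1 \<le> \<rho>" "\<forall>s\<in>{0..R}. m1 \<le> u s \<and> u s \<le> \<rho>" using lsol_bounds[OF u R] .
  obtain m2 where m2: "m2 \<le> \<rho>" "\<forall>s\<in>{0..R}. m2 \<le> v s \<and> v s \<le> \<rho>" using lsol_bounds[OF v R] .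
  define m where "m = min m1 m2"
  have ub: "\<forall>s\<in>{0..R}. m \<le> u s \<and> u s \<le> \<rho>" and vb: "\<forall>s\<in>{0..R}. m \<le> v s \<and> v s \<le> \<rho>"
    using m1 m2 by (auto simp: m_def)
  have mr: "m \<le> \<rho>" using m1 by (simp add: m_def)
  obtain M where M: "M \<ge> 0" and C: "\<And>l R u v D r. l > 0 \<Longrightarrow> continuous_on {0..R} u \<Longrightarrow> continuous_on {0..R} v \<Longrightarrow>
        \<forall>s\<in>{0..R}. m \<le> u s \<and> u s \<le> \<rho> \<Longrightarrow> \<forall>s\<in>{0..R}. m \<le> v s \<and> v s \<le> \<rho> \<Longrightarrow> D \<ge> 0 \<Longrightarrow>
        \<forall>s\<in>{0..R}. \<bar>u s - v s\<bar> \<le> D * W l s \<Longrightarrow> r \<in> {0..R} \<Longrightarrow>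
     \<bar>integral {0..r} (outer_integrand f \<alpha> \<beta> \<gamma> u) - integral {0..r} (outer_integrand f \<alpha> \<beta> \<gamma> v)\<bar>
        \<le> M / l * D * W l r"
    using contraction[OF mr] by metis
  define l where "l = 2 * M + 1"
  have l: "l > 0" "M / l \<le> 1/2" using M by (auto simp: l_def field_simps)
  define B where "B = \<rho> - m"
  have B: "B \<ge> 0" using mr by (simp add: B_def)
  have cu: "continuous_on {0..R} u" and cv: "continuous_on {0..R} v" using u v by (auto simp: lsol_def)
  have ind: "\<forall>s\<in>{0..R}. \<bar>u s - v s\<bar> \<le> (1/2)^n * B * W l s" for n
  proof (induction n)
    case 0
    show ?case
    proof
      fix s assume s: "s \<in> {0..R}"
      have "m \<le> u s" "u s \<le> \<rho>" "m \<le> v s" "v s \<le> \<rho>" using ub vb s by auto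
      then have "\<bar>u s - v s\<bar> \<le> B" by (simp add: B_def abs_le_iff)
      also have "\<dots> \<le> B * W l s" using W_ge1[of l s] l B s by (simp add: mult_le_cancel_left1)
      finally show "\<bar>u s - v s\<bar> \<le> (1/2)^0 * B * W l s" by simp
    qed
  next
    case (Suc n)
    show ?case
    proof
      fix s assume s: "s \<in> {0..R}"
      have "\<bar>u s - v s\<bar> = \<bar>integral {0..s} (outer_integrand f \<alpha> \<beta> \<gamma> v) - integral {0..s} (outer_integrand f \<alpha> \<beta> \<gamma> u)\<bar>"
        using u v s unfolding lsol_def by auto
      also have "\<dots> \<le> M / l * ((1/2)^n * B) * W l s"
        by (rule C[OF l(1) cv cu vb ub _ _ s]) (use Suc B in \<open>auto simp: abs_minus_commute\<close>)
      also have "\<dots> \<le> 1/2 * ((1/2)^n * B) * W l s"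
        using l B W_ge1[of l s] s by (intro mult_right_mono) auto
      finally show "\<bar>u s - v s\<bar> \<le> (1/2)^Suc n * B * W l s" by simp
    qed
  qed
  show ?thesis
  proof
    fix s assume s: "s \<in> {0..R}"
    have "\<bar>u s - v s\<bar> \<le> 0"
      by (rule half_pow_le0[of _ "B * W l s"]) (use ind s in \<open>auto simp: mult.assoc\<close>)
    then show "u s = v s" by simp
  qed
qed


lemma lsol_exists:
  assumes R: "R \<ge> 0"
  shows "\<exists>u. lsol \<rho> R u"
proof -
  define C0 where "C0 = exp (f \<rho>) / (\<gamma>+1)"
  define m where "m = \<rho> - C0 powr P * (R powr (\<kappa>+1) / (\<kappa>+1))"
  have k1: "\<kappa> + 1 > 0" using kap by simp
  have mr: "m \<le> \<rho>" using k1 by (simp add: m_def)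
  define \<Phi> where "\<Phi> = (\<lambda>u r. \<rho> - integral {0..r} (outer_integrand f \<alpha> \<beta> \<gamma> u))"
  define good where "good = (\<lambda>u. continuous_on {0..R} u \<and> (\<forall>s\<in>{0..R}. m \<le> u s \<and> u s \<le> \<rho>))"
  have pres: "good (\<Phi> u)" if g: "good u" for u
  proof -
    have u: "continuous_on {0..R} u" and ub: "\<forall>s\<in>{0..R}. m \<le> u s \<and> u s \<le> \<rho>"
      using g by (auto simp: good_def)
    have c: "continuous_on {0..R} (\<Phi> u)"
      unfolding \<Phi>_def by (intro continuous_intros outer_props(6)[OF u ub R])
    have b: "m \<le> \<Phi> u s \<and> \<Phi> u s \<le> \<rho>" if s: "s \<in> {0..R}" for s
    proof -
      have "integral {0..s} (outer_integrand f \<alpha> \<beta> \<gamma> u) \<le> C0 powr P * (s powr (\<kappa>+1) / (\<kappa>+1))"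
        using outer_props(5)[OF u ub R s] by (simp add: C0_def)
      also have "\<dots> \<le> C0 powr P * (R powr (\<kappa>+1) / (\<kappa>+1))"
        using s k1 by (intro mult_left_mono divide_right_mono powr_mono2) auto
      finally show ?thesis using outer_props(4)[OF u ub R s] by (simp add: \<Phi>_def m_def)
    qed
    show ?thesis using c b by (simp add: good_def)
  qed
  define sq where "sq = (\<lambda>n. (\<Phi> ^^ n) (\<lambda>_. \<rho>))"
  have sqS: "sq (Suc n) = \<Phi> (sq n)" for n by (simp add: sq_def)
  have sq0: "sq 0 = (\<lambda>_. \<rho>)" by (simp add: sq_def)
  have gsq: "good (sq n)" for n
  proof (induction n)
    case 0 show ?case using mr by (simp add: sq0 good_def)
  next
    case (Suc n) then show ?case using pres by (simp add: sqS)
  qed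
  have csq: "continuous_on {0..R} (sq n)" and bsq: "\<forall>s\<in>{0..R}. m \<le> sq n s \<and> sq n s \<le> \<rho>" for n
    using gsq[of n] by (auto simp: good_def)
  obtain M where M: "M \<ge> 0" and C: "\<And>l R u v D r. l > 0 \<Longrightarrow> continuous_on {0..R} u \<Longrightarrow> continuous_on {0..R} v \<Longrightarrow>
        \<forall>s\<in>{0..R}. m \<le> u s \<and> u s \<le> \<rho> \<Longrightarrow> \<forall>s\<in>{0..R}. m \<le> v s \<and> v s \<le> \<rho> \<Longrightarrow> D \<ge> 0 \<Longrightarrow>
        \<forall>s\<in>{0..R}. \<bar>u s - v s\<bar> \<le> D * W l s \<Longrightarrow> r \<in> {0..R} \<Longrightarrow>
     \<bar>integral {0..r} (outer_integrand f \<alpha> \<beta> \<gamma> u) - integral {0..r} (outer_integrand f \<alpha> \<beta> \<gamma> v)\<bar>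
        \<le> M / l * D * W l r"
    using contraction[OF mr] by metis
  define l where "l = 2 * M + 1"
  have l: "l > 0" "M / l \<le> 1/2" using M by (auto simp: l_def field_simps)
  define B where "B = \<rho> - m"
  have B: "B \<ge> 0" using mr by (simp add: B_def)
  have Cl: "\<bar>\<Phi> u s - \<Phi> v s\<bar> \<le> 1/2 * D * W l s"
    if "good u" "good v" "D \<ge> 0" "\<forall>s\<in>{0..R}. \<bar>u s - v s\<bar> \<le> D * W l s" "s \<in> {0..R}" for u v D s
  proof -
    have "\<bar>\<Phi> u s - \<Phi> v s\<bar> = \<bar>integral {0..s} (outer_integrand f \<alpha> \<beta> \<gamma> u) - integral {0..s} (outer_integrand f \<alpha> \<beta> \<gamma> v)\<bar>"
      by (simp add: \<Phi>_def abs_minus_commute)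
    also have "\<dots> \<le> M / l * D * W l s"
      using that by (intro C[OF l(1)]) (auto simp: good_def)
    also have "\<dots> \<le> 1/2 * D * W l s"
      using l that W_ge1[of l s] by (intro mult_right_mono) auto
    finally show ?thesis .
  qed
  define d where "d = (\<lambda>n s. sq (Suc n) s - sq n s)"
  have dind: "\<forall>s\<in>{0..R}. \<bar>d n s\<bar> \<le> (1/2)^n * B * W l s" for n
  proof (induction n)
    case 0
    show ?case
    proof
      fix s assume s: "s \<in> {0..R}"
      have "m \<le> sq 1 s" "sq 1 s \<le> \<rho>" using bsq[of 1] s by auto
      then have "\<bar>d 0 s\<bar> \<le> B" by (simp add: d_def sq0 B_def abs_le_iff)
      also have "\<dots> \<le> B * W l s" using W_ge1[of l s] l B s by (simp add: mult_le_cancel_left1)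
      finally show "\<bar>d 0 s\<bar> \<le> (1/2)^0 * B * W l s" by simp
    qed
  next
    case (Suc n)
    show ?case
    proof
      fix s assume s: "s \<in> {0..R}"
      have "\<bar>d (Suc n) s\<bar> = \<bar>\<Phi> (sq (Suc n)) s - \<Phi> (sq n) s\<bar>" by (simp add: d_def sqS)
      also have "\<dots> \<le> 1/2 * ((1/2)^n * B) * W l s"
        by (rule Cl[OF gsq gsq _ _ s]) (use Suc B in \<open>auto simp: d_def sqS\<close>)
      finally show "\<bar>d (Suc n) s\<bar> \<le> (1/2)^Suc n * B * W l s" by simp
    qed
  qed
  define Q where "Q = B * W l R"
  have Q: "Q \<ge> 0" using B W_ge1[of l R] l R by (simp add: Q_def)
  have dQ: "\<bar>d n s\<bar> \<le> (1/2)^n * Q" if s: "s \<in> {0..R}" for n s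
  proof -
    have "\<bar>d n s\<bar> \<le> (1/2)^n * B * W l s" using dind s by auto
    also have "\<dots> \<le> (1/2)^n * B * W l R"
      using W_mono[of l s R] s l B by (intro mult_left_mono) auto
    finally show ?thesis by (simp add: Q_def mult.assoc)
  qed
  have sumQ: "summable (\<lambda>n. (1/2::real)^n * Q)"
    by (intro summable_mult2 summable_geometric) auto
  have sumQ': "(\<Sum>n. (1/2::real)^n * Q) = 2 * Q"
    using suminf_mult2[of "\<lambda>n. (1/2::real)^n" Q] suminf_geometric[of "1/2::real"] by auto
  define u where "u = (\<lambda>s. \<rho> + (\<Sum>n. d n s))"
  have psum: "(\<Sum>k<n. d k s) = sq n s - \<rho>" for n s
    unfolding d_def using sum_lessThan_telescope[of "\<lambda>k. sq k s" n] by (simp add: sq0)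
  have ul: "uniform_limit {0..R} (\<lambda>n s. \<Sum>k<n. d k s) (\<lambda>s. \<Sum>k. d k s) sequentially"
    by (rule Weierstrass_m_test[OF _ sumQ]) (use dQ in auto)
  have "continuous_on {0..R} (\<lambda>s. \<Sum>k. d k s)"
  proof (rule uniform_limit_theorem[OF _ ul])
    show "\<forall>\<^sub>F n in sequentially. continuous_on {0..R} (\<lambda>s. \<Sum>k<n. d k s)"
      unfolding psum by (intro always_eventually allI continuous_intros csq)
  qed auto
  then have cu: "continuous_on {0..R} u" unfolding u_def by (intro continuous_intros)
  have close: "\<bar>u s - sq n s\<bar> \<le> (1/2)^n * (2 * Q)" if s: "s \<in> {0..R}" for n s
  proof -
    have sd: "summable (\<lambda>k. d k s)"
      by (rule summable_comparison_test'[OF sumQ]) (use dQ s in auto)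
    have "u s - sq n s = (\<Sum>k. d (k + n) s)"
      using suminf_minus_initial_segment[OF sd, of n] psum by (simp add: u_def)
    also have "\<bar>\<dots>\<bar> \<le> (\<Sum>k. (1/2)^n * ((1/2)^k * Q))"
    proof -
      have "norm (\<Sum>k. d (k + n) s) \<le> (\<Sum>k. (1/2)^n * ((1/2)^k * Q))"
      proof (rule norm_suminf_le)
      show "summable (\<lambda>k. (1/2::real)^n * ((1/2)^k * Q))" by (rule summable_mult[OF sumQ])
      fix k
      show "norm (d (k + n) s) \<le> (1/2)^n * ((1/2)^k * Q)"
        using dQ[OF s, of "k+n"] by (simp add: power_add mult_ac)
      qed
      then show ?thesis by simp
    qed
    also have "\<dots> = (1/2)^n * (2 * Q)"
      using suminf_mult[OF sumQ, of "(1/2)^n"] sumQ' by simp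
    finally show ?thesis .
  qed
  have ub: "\<forall>s\<in>{0..R}. m \<le> u s \<and> u s \<le> \<rho>"
  proof
    fix s assume s: "s \<in> {0..R}"
    have "u s - \<rho> \<le> 0"
    proof (rule half_pow_le0[of _ "2 * Q"])
      fix n
      have "m \<le> sq n s" "sq n s \<le> \<rho>" using bsq[of n] s by auto
      then show "u s - \<rho> \<le> (1/2)^n * (2 * Q)" using close[OF s, of n] by (simp add: abs_le_iff)
    qed
    moreover have "m - u s \<le> 0"
    proof (rule half_pow_le0[of _ "2 * Q"])
      fix n
      have "m \<le> sq n s" "sq n s \<le> \<rho>" using bsq[of n] s by auto
      then show "m - u s \<le> (1/2)^n * (2 * Q)" using close[OF s, of n] by (simp add: abs_le_iff)
    qed
    ultimately show "m \<le> u s \<and> u s \<le> \<rho>" by simp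
  qed
  have gu: "good u" using cu ub by (simp add: good_def)
  have fixp: "\<Phi> u s = u s" if s: "s \<in> {0..R}" for s
  proof -
    have "\<bar>\<Phi> u s - u s\<bar> \<le> 0"
    proof (rule half_pow_le0[of _ "Q * W l R + 2 * Q"])
      fix n
      have h: "\<forall>s\<in>{0..R}. \<bar>u s - sq n s\<bar> \<le> ((1/2)^n * (2 * Q)) * W l s"
      proof
        fix t assume t: "t \<in> {0..R}"
        have "\<bar>u t - sq n t\<bar> \<le> (1/2)^n * (2 * Q)" using close[OF t] .
        also have "\<dots> \<le> (1/2)^n * (2 * Q) * W l t"
          using mult_left_mono[OF W_ge1[of l t], of "(1/2)^n * (2 * Q)"] l t Q by simp
        finally show "\<bar>u t - sq n t\<bar> \<le> (1/2)^n * (2 * Q) * W l t" .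
      qed
      have a: "\<bar>\<Phi> u s - \<Phi> (sq n) s\<bar> \<le> 1/2 * ((1/2)^n * (2 * Q)) * W l s"
        by (rule Cl[OF gu gsq _ h s]) (use Q in auto)
      also have "\<dots> \<le> 1/2 * ((1/2)^n * (2 * Q)) * W l R"
        using W_mono[of l s R] s l Q by (intro mult_left_mono) auto
      also have "\<dots> = (1/2)^n * (Q * W l R)" by simp
      finally have a': "\<bar>\<Phi> u s - sq (Suc n) s\<bar> \<le> (1/2)^n * (Q * W l R)" by (simp add: sqS)
      have b: "\<bar>sq (Suc n) s - u s\<bar> \<le> (1/2)^n * (2 * Q)"
        using close[OF s, of "Suc n"] Q by (simp add: abs_minus_commute)
      show "\<bar>\<Phi> u s - u s\<bar> \<le> (1/2)^n * (Q * W l R + 2 * Q)"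
        using a' b by (simp add: distrib_left)
    qed
    then show ?thesis by simp
  qed
  have "lsol \<rho> R u"
    unfolding lsol_def
  proof (intro conjI ballI)
    show "continuous_on {0..R} u" by (rule cu)
    fix t assume t: "t \<in> {0..R}"
    show "inner_integrand f \<gamma> u integrable_on {0..t}" using inner_props(1)[OF cu ub] t by auto
    show "outer_integrand f \<alpha> \<beta> \<gamma> u integrable_on {0..t}" using outer_props(3)[OF cu ub R t] .
    show "u t = \<rho> - integral {0..t} (outer_integrand f \<alpha> \<beta> \<gamma> u)"
      using fixp[OF t] by (simp add: \<Phi>_def)
  qed
  then show ?thesis by blast
qed


lemma lsol_restrict: "lsol \<rho> R u \<Longrightarrow> 0 \<le> R' \<Longrightarrow> R' \<le> R \<Longrightarrow> lsol \<rho> R' u"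
  unfolding lsol_def by (auto intro: continuous_on_subset)

lemma cong_lemma:
  assumes eq: "\<forall>s\<in>{0..R}. u s = v s" and t: "t \<in> {0..R}"
  shows "inner_integrand f \<gamma> u integrable_on {0..t} \<longleftrightarrow> inner_integrand f \<gamma> v integrable_on {0..t}"
    and "outer_integrand f \<alpha> \<beta> \<gamma> u integrable_on {0..t} \<longleftrightarrow> outer_integrand f \<alpha> \<beta> \<gamma> v integrable_on {0..t}"
    and "integral {0..t} (outer_integrand f \<alpha> \<beta> \<gamma> u) = integral {0..t} (outer_integrand f \<alpha> \<beta> \<gamma> v)"
proof -
  have ie: "inner_integrand f \<gamma> u s = inner_integrand f \<gamma> v s" if "s \<in> {0..R}" for s
    using eq that by (simp add: inner_integrand_def)
  have oe: "outer_integrand f \<alpha> \<beta> \<gamma> u s = outer_integrand f \<alpha> \<beta> \<gamma> v s" if s: "s \<in> {0..R}" for s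
  proof -
    have "integral {0..s} (inner_integrand f \<gamma> u) = integral {0..s} (inner_integrand f \<gamma> v)"
      by (rule Henstock_Kurzweil_Integration.integral_cong) (use ie s in auto)
    then show ?thesis by (simp add: outer_integrand_def)
  qed
  show "inner_integrand f \<gamma> u integrable_on {0..t} \<longleftrightarrow> inner_integrand f \<gamma> v integrable_on {0..t}"
    by (rule integrable_cong) (use ie t in auto)
  show "outer_integrand f \<alpha> \<beta> \<gamma> u integrable_on {0..t} \<longleftrightarrow> outer_integrand f \<alpha> \<beta> \<gamma> v integrable_on {0..t}"
    by (rule integrable_cong) (use oe t in auto)
  show "integral {0..t} (outer_integrand f \<alpha> \<beta> \<gamma> u) = integral {0..t} (outer_integrand f \<alpha> \<beta> \<gamma> v)"
    by (rule Henstock_Kurzweil_Integration.integral_cong) (use oe t in auto)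
qed

lemma lsol_cong:
  assumes "lsol \<rho> R u" "\<forall>s\<in>{0..R}. u s = v s"
  shows "lsol \<rho> R v"
proof -
  have "continuous_on {0..R} v"
    using assms continuous_on_cong[of "{0..R}" "{0..R}" u v] unfolding lsol_def by auto
  then show ?thesis using assms cong_lemma[OF assms(2)] unfolding lsol_def by auto
qed

lemma solves_iff: "solves_IE f \<alpha> \<beta> \<gamma> \<rho> u \<longleftrightarrow> continuous_on {0..} u \<and> (\<forall>R\<ge>0. lsol \<rho> R u)"
  unfolding solves_IE_def lsol_def
  by (auto intro: continuous_on_subset)

lemma global:
  "\<exists>u. solves_IE f \<alpha> \<beta> \<gamma> \<rho> u \<and> (\<forall>v. solves_IE f \<alpha> \<beta> \<gamma> \<rho> v \<longrightarrow> (\<forall>r\<ge>0. v r = u r))"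
proof -
  define sol where "sol = (\<lambda>n::nat. SOME u. lsol \<rho> (real n) u)"
  have sol: "lsol \<rho> (real n) (sol n)" for n
    unfolding sol_def using lsol_exists[of "real n" \<rho>] by (metis of_nat_0_le_iff someI_ex)
  define U where "U = (\<lambda>s. sol (nat \<lceil>s\<rceil>) s)"
  have US: "U s = sol N s" if "0 \<le> s" "s \<le> real N" for s N
  proof -
    have a: "lsol \<rho> s (sol (nat \<lceil>s\<rceil>))"
      by (rule lsol_restrict[OF sol]) (use that in auto)
    have b: "lsol \<rho> s (sol N)" by (rule lsol_restrict[OF sol]) (use that in auto)
    show ?thesis using lsol_unique[OF a b that(1)] that by (auto simp: U_def)
  qed
  have lU: "lsol \<rho> R U" if R: "R \<ge> 0" for R
  proof -
    have "lsol \<rho> R (sol (nat \<lceil>R\<rceil>))" by (rule lsol_restrict[OF sol]) (use R in auto)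
    moreover have "\<forall>s\<in>{0..R}. sol (nat \<lceil>R\<rceil>) s = U s"
    proof
      fix s assume s: "s \<in> {0..R}"
      have "R \<le> real (nat \<lceil>R\<rceil>)" by linarith
      then show "sol (nat \<lceil>R\<rceil>) s = U s" using US[of s "nat \<lceil>R\<rceil>"] s by (metis atLeastAtMost_iff order_trans)
    qed
    ultimately show ?thesis by (rule lsol_cong)
  qed
  have cU: "continuous_on {0..} U"
    unfolding continuous_on_eq_continuous_within
  proof
    fix x :: real assume x: "x \<in> {0..}"
    define N where "N = nat \<lceil>x\<rceil> + 1"
    have xN: "x + 1 \<le> real N" unfolding N_def by linarith
    define g where "g = (\<lambda>s. sol N (min s (real N)))"
    have c1: "continuous_on {0..real N} (sol N)" using sol[of N] by (simp add: lsol_def)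
    have c2: "continuous_on {0..} (\<lambda>s::real. min s (real N))" by (intro continuous_intros)
    have "continuous_on {0..} g"
      unfolding g_def by (rule continuous_on_compose2[OF c1 c2]) auto
    then have "continuous (at x within {0..}) g"
      using x continuous_on_eq_continuous_within by blast
    then show "continuous (at x within {0..}) U"
    proof (rule continuous_transform_within[of _ _ _ 1])
      fix x' assume "x' \<in> {0..}" "dist x' x < 1"
      then have "0 \<le> x'" "x' \<le> real N" using xN by (auto simp: dist_real_def)
      then show "g x' = U x'" using US by (simp add: g_def)
    qed (use x in auto)
  qed
  have "solves_IE f \<alpha> \<beta> \<gamma> \<rho> U" using cU lU solves_iff by blast
  moreover have "\<forall>r\<ge>0. v r = U r" if "solves_IE f \<alpha> \<beta> \<gamma> \<rho> v" for v
  proof (intro allI impI)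
    fix r :: real assume r: "r \<ge> 0"
    have "lsol \<rho> r v" using that r solves_iff by blast
    then show "v r = U r" using lsol_unique[OF _ lU[OF r] r] r by auto
  qed
  ultimately show ?thesis by blast
qed

end


lemma deriv_lip:
  fixes g g' :: "real \<Rightarrow> real"
  assumes d: "\<And>x. (g has_real_derivative g' x) (at x)" and c: "continuous_on UNIV g'" and mr: "m \<le> \<rho>"
  shows "\<exists>L\<ge>0. \<forall>x\<in>{m..\<rho>}. \<forall>y\<in>{m..\<rho>}. \<bar>g x - g y\<bar> \<le> L * \<bar>x - y\<bar>"
proof -
  have cc: "continuous_on {m..\<rho>} (\<lambda>x. \<bar>g' x\<bar>)"
    by (intro continuous_intros continuous_on_subset[OF c]) auto
  obtain x0 where x0: "x0 \<in> {m..\<rho>}" "\<forall>y\<in>{m..\<rho>}. \<bar>g' y\<bar> \<le> \<bar>g' x0\<bar>"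
    using continuous_attains_sup[OF compact_Icc _ cc] mr by auto
  define L where "L = \<bar>g' x0\<bar>"
  have key: "\<bar>g x - g y\<bar> \<le> L * \<bar>x - y\<bar>" if "x \<in> {m..\<rho>}" "y \<in> {m..\<rho>}" "x < y" for x y
  proof -
    have "\<exists>z>x. z < y \<and> g y - g x = (y - x) * g' z"
      using \<open>x < y\<close> by (intro MVT2) (use d in auto)
    then obtain z where z: "x < z" "z < y" "g y - g x = (y - x) * g' z" by blast
    have "\<bar>g' z\<bar> \<le> L" using x0 z that by (auto simp: L_def)
    then have "\<bar>y - x\<bar> * \<bar>g' z\<bar> \<le> \<bar>y - x\<bar> * L" by (intro mult_left_mono) auto
    moreover have "\<bar>g x - g y\<bar> = \<bar>y - x\<bar> * \<bar>g' z\<bar>"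
    proof -
      have "\<bar>g x - g y\<bar> = \<bar>g y - g x\<bar>" by (rule abs_minus_commute)
      also have "\<dots> = \<bar>(y - x) * g' z\<bar>" using z(3) by simp
      finally show ?thesis by (simp add: abs_mult)
    qed
    ultimately show ?thesis by (simp add: abs_minus_commute mult.commute)
  qed
  show ?thesis
  proof (intro exI[of _ L] conjI ballI)
    show "L \<ge> 0" by (simp add: L_def)
    fix x y assume xy: "x \<in> {m..\<rho>}" "y \<in> {m..\<rho>}"
    show "\<bar>g x - g y\<bar> \<le> L * \<bar>x - y\<bar>"
    proof (cases x y rule: linorder_cases)
      case less then show ?thesis using key xy by blast
    next
      case equal then show ?thesis by (simp add: L_def)
    next
      case greater then show ?thesis using key[of y x] xy by (simp add: abs_minus_commute)
    qed
  qed
qed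

theorem mainTheorem13:
  fixes f :: "real \<Rightarrow> real" and \<alpha> \<beta> \<gamma> \<theta> :: real
  assumes B1_C1: "\<exists>f'. (\<forall>x. (f has_real_derivative f' x) (at x)) \<and> continuous_on UNIV f'
                      \<and> (\<forall>x. f' x > 0)"
    and B1_lim: "filterlim f at_top at_top"
    and B3_1: "\<alpha> > \<beta> + 1" and B3_2: "\<beta> + 1 > 0"
    and B3_theta: "\<theta> = \<gamma> + 2 + \<beta> - \<alpha>" and B3_3: "\<theta> > 0"
  shows "\<forall>\<rho>::real. \<exists>u. solves_IE f \<alpha> \<beta> \<gamma> \<rho> u \<and>
            (\<forall>v. solves_IE f \<alpha> \<beta> \<gamma> \<rho> v \<longrightarrow> (\<forall>r\<ge>0. v r = u r))"
proof -
  obtain f' where d: "\<And>x. (f has_real_derivative f' x) (at x)" and c: "continuous_on UNIV f'"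
    and p: "\<And>x. f' x > 0"
    using B1_C1 by blast
  have fmono: "f x \<le> f y" if "x \<le> y" for x y
  proof (cases "x = y")
    case False
    then have "x < y" using that by simp
    then show ?thesis using DERIV_pos_imp_increasing[of x y f] d p by (meson less_imp_le)
  qed simp
  have fcont: "continuous_on UNIV f"
    using d by (intro continuous_at_imp_continuous_on ballI DERIV_isCont) blast
  have dE: "\<And>x. ((\<lambda>x. exp (f x)) has_real_derivative exp (f x) * f' x) (at x)"
    using d by (auto intro!: derivative_eq_intros)
  have cE: "continuous_on UNIV (\<lambda>x. exp (f x) * f' x)"
    by (intro continuous_intros fcont c)
  interpret IE f \<alpha> \<beta> \<gamma>
  proof
    show "\<And>x y. x \<le> y \<Longrightarrow> f x \<le> f y" by (rule fmono)
    show "continuous_on UNIV f" by (rule fcont)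
    show "\<And>m \<rho>. m \<le> \<rho> \<Longrightarrow> \<exists>L\<ge>0. \<forall>x\<in>{m..\<rho>}. \<forall>y\<in>{m..\<rho>}. \<bar>exp (f x) - exp (f y)\<bar> \<le> L * \<bar>x - y\<bar>"
      by (rule deriv_lip[OF dE cE])
  qed (use B3_1 B3_2 B3_theta B3_3 in auto)
  show ?thesis using global by blast
qed

end
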